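(* Fix $0<q<1$. For every $G\in\mathcal G$ with $G\ne E$, $$-\log\Big(\frac{q}{1-q}\|G-E\|\Big)\le T_q(G)\le\frac{1-q}{q}\cdot\frac{1}{\|G-E\|}.$$
   Context: $E(t)=1-e^{-t}$, $\bar E=1-E$, $\bar G=1-G$. $\mathcal G=\{E\#F:F$ a probability distribution on $[1,\infty)\}$ with $(E\#F)(t)=\int E(t/\mu)\,dF(\mu)$. $T_q(G)=\inf\{t:\bar G(t)\ge\frac1q\bar E(t)\}$. $\|G-G'\|=\sup_t|G(t)-G'(t)|$ is the Kolmogorov–Smirnov distance. *)

theory Defs
  imports "HOL-Probability.Probability"
begin

definition Eexp :: "real \<Rightarrow> real" where
  "Eexp t = (if t < 0 then 0 else 1 - exp (- t))"

definition mix :: "real measure \<Rightarrow> real \<Rightarrow> real" where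
  "mix F t = (\<integral>\<mu>. Eexp (t / \<mu>) \<partial>F)"

definition scale_dist :: "real measure \<Rightarrow> bool" where
  "scale_dist F \<longleftrightarrow> prob_space F \<and> sets F = sets borel \<and> measure F {1..} = 1"

definition KS :: "(real \<Rightarrow> real) \<Rightarrow> (real \<Rightarrow> real) \<Rightarrow> real" where
  "KS G G' = (SUP t. \<bar>G t - G' t\<bar>)"

definition Tq :: "real \<Rightarrow> (real \<Rightarrow> real) \<Rightarrow> real" where
  "Tq q G = Inf {t. 1 - G t \<ge> (1 / q) * (1 - Eexp t)}"

end

theory Submission
  imports Defs
begin

lemma exp_cvx: assumes "0 \<le> a" "a \<le> 1" shows "exp (a * x) \<le> 1 - a + a * exp (x::real)"
proof -
  have "exp ((1 - a) *\<^sub>R 0 + a *\<^sub>R x) \<le> (1 - a) * exp 0 + a * exp x"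
    using assms by (intro convex_onD[OF exp_convex]) auto
  then show ?thesis by simp
qed

lemma main:
  fixes q :: real and F :: "real measure"
  assumes q0: "0 < q" and q1: "q < 1"
    and P: "prob_space F" and S: "sets F = sets borel" and M1: "measure F {1..} = 1"
    and ne: "mix F \<noteq> Eexp"
  shows "- ln (q / (1 - q) * KS (mix F) Eexp) \<le> Tq q (mix F)
       \<and> Tq q (mix F) \<le> (1 - q) / q * (1 / KS (mix F) Eexp)"
proof -
  interpret prob_space F by (rule P)
  have AE1: "AE \<mu> in F. 1 \<le> \<mu>"
  proof -
    have "{1..} \<in> events" using S by simp
    then have "AE \<mu> in F. \<mu> \<in> {1::real..}" using AE_in_set_eq_1 M1 by blast
    then show ?thesis by (simp add: atLeast_iff)
  qed
  have meas: "f \<in> borel_measurable F" if "f \<in> borel_measurable borel" for f :: "real \<Rightarrow> real"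
    using that measurable_cong_sets[OF S refl, of "borel :: real measure"] by (simp only:)
  have int: "integrable F f" if "f \<in> borel_measurable borel" "AE \<mu> in F. norm (f \<mu>) \<le> B"
    for f :: "real \<Rightarrow> real" and B
    using integrable_const_bound[OF that(2) meas[OF that(1)]] .
  define Gb where "Gb t = (\<integral>\<mu>. exp (- t / \<mu>) \<partial>F)" for t
  define m where "m = (\<integral>\<mu>. (1 - 1 / \<mu>) \<partial>F)"
  have intG: "integrable F (\<lambda>\<mu>. exp (- t / \<mu>))" if "t \<ge> 0" for t
    apply (rule int[of _ 1])
     apply measurable
    using AE1 apply eventually_elim
    using that by (auto simp: divide_nonneg_pos)
  have intm: "integrable F (\<lambda>\<mu>. 1 / \<mu>)"
    apply (rule int[of _ 1])
     apply measurable
    using AE1 apply eventually_elim by auto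
  have measE: "(\<lambda>\<mu>. Eexp (t / \<mu>)) \<in> borel_measurable borel" for t
    unfolding Eexp_def by measurable
  have neg: "mix F t = 0" if "t < 0" for t
  proof -
    have "mix F t = (\<integral>\<mu>. 0 \<partial>F)"
      unfolding mix_def
      apply (rule integral_cong_AE)
        apply (rule meas[OF measE]) apply simp
      using AE1 apply eventually_elim
      using that by (auto simp: Eexp_def divide_neg_pos)
    then show ?thesis by simp
  qed
  have pos: "1 - mix F t = Gb t" if "t \<ge> 0" for t
  proof -
    have "mix F t = (\<integral>\<mu>. (1 - exp (- t / \<mu>)) \<partial>F)"
      unfolding mix_def
      apply (rule integral_cong_AE)
        apply (rule meas[OF measE]) apply (rule meas) apply measurable
      using AE1 apply eventually_elim
    proof -
      fix x :: real assume "1 \<le> x"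
      then have "t / x \<ge> 0" using that by simp
      then show "Eexp (t / x) = 1 - exp (- t / x)" by (simp add: Eexp_def)
    qed
    also have "\<dots> = 1 - Gb t"
      unfolding Gb_def using intG[OF that] by (simp add: prob_space)
    finally show ?thesis by simp
  qed
  have Epos: "1 - Eexp t = exp (- t)" if "t \<ge> 0" for t
    using that by (simp add: Eexp_def)
  have Gge: "Gb t \<ge> exp (- t)" if "t \<ge> 0" for t
  proof -
    have "(\<integral>\<mu>. exp (- t) \<partial>F) \<le> Gb t"
      unfolding Gb_def
      apply (rule integral_mono_AE)
        apply simp
       apply (rule intG[OF that])
      using AE1 apply eventually_elim
      using that by (auto simp: field_simps) (metis mult_right_mono mult_1)
    then show ?thesis by (simp add: prob_space)
  qed
  have Gle: "Gb t - exp (- t) \<le> m" if "t \<ge> 0" for t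
  proof -
    have "Gb t \<le> (\<integral>\<mu>. ((1 - 1 / \<mu>) + exp (- t)) \<partial>F)"
      unfolding Gb_def
      apply (rule integral_mono_AE)
        apply (rule intG[OF that])
       using intm apply simp
      using AE1 apply eventually_elim
    proof -
      fix \<mu> :: real assume h: "1 \<le> \<mu>"
      have "exp ((1/\<mu>) * (-t)) \<le> 1 - 1/\<mu> + (1/\<mu>) * exp (-t)"
        using h by (intro exp_cvx) auto
      also have "\<dots> \<le> 1 - 1/\<mu> + exp (-t)"
        using h by (simp add: divide_le_eq)
      finally show "exp (- t / \<mu>) \<le> 1 - 1 / \<mu> + exp (- t)" by simp
    qed
    also have "\<dots> = m + exp (- t)"
      unfolding m_def using intm by (simp add: prob_space)
    finally show ?thesis by simp
  qed
  have hge: "exp t * Gb t \<ge> 1 + t * m" if "t \<ge> 0" for t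
  proof -
    have "(\<integral>\<mu>. (1 + t * (1 - 1 / \<mu>)) \<partial>F) \<le> (\<integral>\<mu>. exp t * exp (- t / \<mu>) \<partial>F)"
      apply (rule integral_mono_AE)
        using intm apply simp
       using intG[OF that] apply simp
      using AE1 apply eventually_elim
    proof -
      fix \<mu> :: real assume h: "1 \<le> \<mu>"
      have "1 + t * (1 - 1 / \<mu>) \<le> exp (t * (1 - 1 / \<mu>))" by (rule exp_ge_add_one_self)
      also have "\<dots> = exp t * exp (- t / \<mu>)" by (simp add: exp_add[symmetric] algebra_simps)
      finally show "1 + t * (1 - 1 / \<mu>) \<le> exp t * exp (- t / \<mu>)" .
    qed
    then show ?thesis unfolding Gb_def m_def using intm by (simp add: prob_space)
  qed

  define D where "D = KS (mix F) Eexp"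
  have m0: "m \<ge> 0"
  proof -
    have "(\<integral>\<mu>. 0 \<partial>F) \<le> m" unfolding m_def
      apply (rule integral_mono_AE) apply simp using intm apply simp
      using AE1 apply eventually_elim by auto
    then show ?thesis by simp
  qed
  have diff_le: "\<bar>mix F t - Eexp t\<bar> \<le> m" for t
  proof (cases "t < 0")
    case True then show ?thesis using neg[OF True] m0 by (simp add: Eexp_def)
  next
    case False
    then have "mix F t = 1 - Gb t" "Eexp t = 1 - exp (- t)" using pos Epos by (auto simp: algebra_simps)
    then show ?thesis using Gge Gle False by simp
  qed
  have bdd: "bdd_above (range (\<lambda>t. \<bar>mix F t - Eexp t\<bar>))"
    using diff_le by (intro bdd_aboveI[where M=m]) auto
  have Dge: "\<bar>mix F t - Eexp t\<bar> \<le> D" for t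
    unfolding D_def KS_def by (rule cSUP_upper[OF _ bdd]) simp
  have Dle: "D \<le> m"
    unfolding D_def KS_def by (rule cSUP_least) (auto intro: diff_le)
  obtain t0 where "mix F t0 \<noteq> Eexp t0" using ne by blast
  then have D0: "D > 0" using Dge[of t0] by linarith
  have mpos: "m > 0" using D0 Dle by linarith
  define Sset where "Sset = {t. 1 - mix F t \<ge> (1 / q) * (1 - Eexp t)}"
  have Sdef: "Tq q (mix F) = Inf Sset" unfolding Tq_def Sset_def ..
  have Snn: "t \<ge> 0" if "t \<in> Sset" for t
  proof (rule ccontr)
    assume "\<not> t \<ge> 0"
    then have "t < 0" by simp
    then have "1 \<ge> 1 / q" using that neg[of t] unfolding Sset_def by (simp add: Eexp_def)
    then show False using q0 q1 by (simp add: field_simps)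
  qed
  have Smem: "t \<in> Sset \<longleftrightarrow> Gb t \<ge> exp (- t) / q" if "t \<ge> 0" for t
    unfolding Sset_def using pos[OF that] Epos[OF that] by simp
  define ts where "ts = (1 - q) / (q * m)"
  have ts0: "ts \<ge> 0" unfolding ts_def using q0 q1 mpos by simp
  have "exp ts * Gb ts \<ge> 1 / q"
  proof -
    have "1 + ts * m = 1 / q" unfolding ts_def using q0 mpos by (simp add: field_simps)
    then show ?thesis using hge[OF ts0] by simp
  qed
  then have "Gb ts \<ge> exp (- ts) / q"
  proof -
    assume a: "exp ts * Gb ts \<ge> 1 / q"
    have "exp (- ts) / q = (1 / q) / exp ts" by (simp add: exp_minus field_simps)
    also have "\<dots> \<le> Gb ts" using a by (subst pos_divide_le_eq) (auto simp: mult.commute)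
    finally show ?thesis .
  qed
  then have tsS: "ts \<in> Sset" using Smem[OF ts0] by simp
  have bddS: "bdd_below Sset" using Snn by (intro bdd_belowI[where m=0]) auto
  have up: "Inf Sset \<le> ts" by (rule cInf_lower[OF tsS bddS])
  have "ts \<le> (1 - q) / q * (1 / D)"
  proof -
    have "ts = (1 - q) / q * (1 / m)" unfolding ts_def by simp
    also have "\<dots> \<le> (1 - q) / q * (1 / D)"
      using q0 q1 D0 Dle by (intro mult_left_mono divide_left_mono) auto
    finally show ?thesis .
  qed
  with up have upper: "Inf Sset \<le> (1 - q) / q * (1 / D)" by linarith
  have lower: "- ln (q / (1 - q) * D) \<le> Inf Sset"
  proof (rule cInf_greatest)
    show "Sset \<noteq> {}" using tsS by blast
  next
    fix t assume tS: "t \<in> Sset"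
    have t0: "t \<ge> 0" using Snn[OF tS] .
    have g: "Gb t \<ge> exp (- t) / q" using Smem[OF t0] tS by simp
    have "Gb t - exp (- t) \<le> D"
      using Dge[of t] pos[OF t0] Epos[OF t0] Gge[OF t0] by (simp add: algebra_simps)
    then have "exp (- t) / q - exp (- t) \<le> D" using g by linarith
    then have "exp (- t) * ((1 - q) / q) \<le> D" using q0 by (simp add: field_simps)
    then have e: "exp (- t) \<le> q / (1 - q) * D" using q0 q1 by (simp add: field_simps)
    have "- t \<le> ln (q / (1 - q) * D)"
      using e q0 q1 D0 by (subst ln_ge_iff) auto
    then show "- ln (q / (1 - q) * D) \<le> t" by linarith
  qed
  show ?thesis using upper lower unfolding Sdef D_def by simp
qed

theorem lemma4p4:
  fixes q :: real and F :: "real measure"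
  assumes "0 < q" and "q < 1"
    and "scale_dist F"
    and "mix F \<noteq> Eexp"
  shows "- ln (q / (1 - q) * KS (mix F) Eexp) \<le> Tq q (mix F)
       \<and> Tq q (mix F) \<le> (1 - q) / q * (1 / KS (mix F) Eexp)"
  using main assms unfolding scale_dist_def by blast

end
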